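(* Let $A\in\mathbb{R}^{n\times n}$, $B\in\mathbb{R}^{n\times m}$, $\bar T>0$, let $\tilde B\in\mathbb{C}^{r\times m}$ be fixed and let $D=\operatorname{diag}(\lambda_1,\ldots,\lambda_r)$, with $\lambda_i+\lambda_j\neq 0$ for all $i,j$ and $\lambda_i\notin\Lambda(-A)$ for all $i$. Let $\tilde P_{\bar T}=\tilde P_{\bar T}(\lambda_1,\dots,\lambda_r)$ and $\tilde P_{2,\bar T}=\tilde P_{2,\bar T}(\lambda_1,\dots,\lambda_r)$ be the solutions of $$A \tilde P_{2, {\bar T}}+ \tilde P_{2, {\bar T}} D =-B \tilde B^T+e^{A \bar T}B \tilde B^T e^{D \bar T},\qquad D\tilde P_{\bar T}+\tilde P_{\bar T} D =-\tilde B \tilde B^T+e^{D \bar T}\tilde B \tilde B^T e^{D \bar T}.$$ Then for each $i\in\{1,\dots,r\}$ the partial derivatives $X^{(i)}:=\partial_{\lambda_i} \tilde P_{\bar T}$ and $X_2^{(i)}:=\partial_{\lambda_i} \tilde P_{2, \bar T}$ solve $$DX^{(i)}+X^{(i)} D =-e_ie_i^T\tilde P_{\bar T}-\tilde P_{\bar T}e_ie_i^T+\bar T e_ie_i^Te^{D \bar T}\tilde B \tilde B^T e^{D \bar T}+\bar Te^{D \bar T}\tilde B \tilde B^T e^{D \bar T}e_ie_i^T,$$ $$A X_2^{(i)}+ X_2^{(i)} D =-\tilde P_{2, {\bar T}} e_ie_i^T+\bar T e^{A \bar T}B \tilde B^T e^{D \bar T}e_ie_i^T,$$ respectively.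
   Context: $e_i$ denotes the $i$-th column of the identity matrix of appropriate size. $\Lambda(A)$ is the spectrum of $A$. In the paper's setting $D$ arises from a diagonalization $\hat A=S^{-1}DS$ of a reduced matrix $\hat A$ and $\tilde B=S\hat B$; the derivatives are taken with respect to the eigenvalues $\lambda_i$ with $\tilde B$ held fixed. *)

theory Defs
  imports "HOL-Analysis.Analysis"
begin

(* Matrices are represented as elements of 'a^'cols^'rows (HOL-Analysis),
   with matrix product (**). *)

primrec mat_pow :: "('a::semiring_1)^'n^'n \<Rightarrow> nat \<Rightarrow> 'a^'n^'n" where
  "mat_pow M 0 = mat 1"
| "mat_pow M (Suc k) = M ** mat_pow M k"

definition mexp :: "complex^'n^'n \<Rightarrow> complex^'n^'n" where
  "mexp M = (\<Sum>k. (1 / fact k :: real) *\<^sub>R mat_pow M k)"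

definition cspectrum :: "complex^'n^'n \<Rightarrow> complex set" where
  "cspectrum M = {z. \<exists>v. v \<noteq> 0 \<and> M *v v = z *s v}"

definition cmat :: "real^'m^'n \<Rightarrow> complex^'m^'n" where
  "cmat M = (\<chi> i j. complex_of_real (M $ i $ j))"

definition diagm :: "complex^'r \<Rightarrow> complex^'r^'r" where
  "diagm lam = (\<chi> i j. if i = j then lam $ i else 0)"

definition eemat :: "'r \<Rightarrow> complex^'r^'r" where
  "eemat i = (\<chi> j k. if j = i \<and> k = i then 1 else 0)"

definition admissible :: "real^'n^'n \<Rightarrow> complex^'r \<Rightarrow> bool" where
  "admissible A lam \<longleftrightarrow>
     (\<forall>i j. lam $ i + lam $ j \<noteq> 0) \<and> (\<forall>i. lam $ i \<notin> cspectrum (- cmat A))"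

end

theory Submission
  imports Defs
begin



lemma sd1: fixes a :: "'a::finite" shows "(\<Sum>k\<in>UNIV. f k * (if k = a then g k else 0)) = f a * (g a :: 'b::comm_ring_1)"
proof -
  have "(\<Sum>k\<in>UNIV. f k * (if k = a then g k else 0)) = (\<Sum>k\<in>UNIV. if k = a then f a * g a else 0)"
    by (rule sum.cong) auto
  thus ?thesis by simp
qed
lemma sd2: fixes a :: "'a::finite" shows "(\<Sum>k\<in>UNIV. f k * (if a = k then g k else 0)) = f a * (g a :: 'b::comm_ring_1)"
  using sd1[of f a g] by (simp add: eq_commute[of a])
lemma sd3: fixes a :: "'a::finite" shows "(\<Sum>k\<in>UNIV. (if k = a then g k else 0) * f k) = g a * (f a :: 'b::comm_ring_1)"
  using sd1[of f a g] by (simp add: mult.commute)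
lemma sd4: fixes a :: "'a::finite" shows "(\<Sum>k\<in>UNIV. (if a = k then g k else 0) * f k) = g a * (f a :: 'b::comm_ring_1)"
  using sd3[of a g f] by (simp add: eq_commute[of a])


lemma diag_left: "(diagm u ** C) $ a $ c = u $ a * C $ a $ c"
  by (simp add: matrix_matrix_mult_def diagm_def sd1 sd2 sd3 sd4)

lemma diag_right: "(C ** diagm w) $ a $ c = C $ a $ c * w $ c"
  by (simp add: matrix_matrix_mult_def diagm_def sd1 sd2 sd3 sd4)

lemma ee_left: "(eemat i ** C) $ a $ c = (if a = i then C $ a $ c else 0)"
proof -
  have "(eemat i ** C) $ a $ c = (\<Sum>k\<in>UNIV. (if a = i then (if k = i then C $ i $ c else 0) else 0))"
    unfolding matrix_matrix_mult_def eemat_def by (simp, rule sum.cong) auto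
  thus ?thesis by simp
qed

lemma ee_right: "(C ** eemat i) $ a $ c = (if c = i then C $ a $ c else 0)"
proof -
  have "(C ** eemat i) $ a $ c = (\<Sum>k\<in>UNIV. (if c = i then (if k = i then C $ a $ i else 0) else 0))"
    unfolding matrix_matrix_mult_def eemat_def by (simp, rule sum.cong) auto
  thus ?thesis by simp
qed

lemma col_eq:
  fixes N :: "complex^'x^'x" and Q :: "complex^'r^'x" and m :: "complex^'r"
  shows "(N ** Q + Q ** diagm m) $ a $ k = ((N + mat (m $ k)) *v (\<chi> l. Q $ l $ k)) $ a"
proof -
  have "((N + mat (m $ k)) *v (\<chi> l. Q $ l $ k)) $ a = (\<Sum>l\<in>UNIV. N $ a $ l * Q $ l $ k + (if a = l then m $ k else 0) * Q $ l $ k)"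
    by (simp add: matrix_vector_mult_def mat_def distrib_right)
  also have "\<dots> = (N ** Q) $ a $ k + Q $ a $ k * m $ k"
    by (simp add: sum.distrib sd1 sd2 sd3 sd4 matrix_matrix_mult_def mult.commute)
  finally show ?thesis by (simp add: diag_right)
qed

lemma not_spec_iff: "s \<notin> cspectrum (- cmat A) \<longleftrightarrow> det (cmat A + mat s) \<noteq> 0"
proof -
  have r: "((cmat A + mat s) *v v) $ i = (\<Sum>j\<in>UNIV. cmat A $ i $ j * v $ j) + s * v $ i" for v i
  proof -
    have "((cmat A + mat s) *v v) $ i = (\<Sum>j\<in>UNIV. cmat A $ i $ j * v $ j + (if i = j then s * v $ j else 0))"
      by (auto simp: matrix_vector_mult_def mat_def distrib_right intro!: sum.cong)
    thus ?thesis by (simp add: sum.distrib)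
  qed
  have r2: "((- cmat A) *v v) $ i = - (\<Sum>j\<in>UNIV. cmat A $ i $ j * v $ j)" for v i
    by (simp add: matrix_vector_mult_def sum_negf)
  have e: "(cmat A + mat s) *v v = 0 \<longleftrightarrow> (- cmat A) *v v = s *s v" for v
    unfolding vec_eq_iff r r2 by (auto simp: add_eq_0_iff)
  show ?thesis
    unfolding invertible_det_nz[symmetric] invertible_left_inverse matrix_left_invertible_ker
      cspectrum_def using e by auto
qed

lemma diag_mult: "diagm u ** diagm w = diagm (\<chi> j. u $ j * w $ j)"
proof -
  have "(diagm u ** diagm w) $ a $ b = diagm (\<chi> j. u $ j * w $ j) $ a $ b" for a b
    by (simp only: diag_left) (simp add: diagm_def)
  thus ?thesis by (simp add: vec_eq_iff)
qed

lemma mat_pow_diag: "mat_pow (diagm v) k = diagm (\<chi> j. v $ j ^ k)"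
proof (induction k)
  case 0 thus ?case by (auto simp: diagm_def mat_def vec_eq_iff)
next
  case (Suc k)
  thus ?case by (simp add: diag_mult)
qed

lemma mexp_diag: "mexp (T *\<^sub>R diagm mu) = diagm (\<chi> j. exp (complex_of_real T * mu $ j))"
proof -
  have d: "T *\<^sub>R diagm mu = diagm (\<chi> j. complex_of_real T * mu $ j)"
    unfolding vec_eq_iff by (simp add: diagm_def) (simp add: scaleR_conv_of_real)
  have "(\<lambda>k. (1 / fact k :: real) *\<^sub>R mat_pow (T *\<^sub>R diagm mu) k) sums diagm (\<chi> j. exp (complex_of_real T * mu $ j))"
  proof -
    have "(\<lambda>n. \<Sum>k<n. (1 / fact k :: real) *\<^sub>R diagm (\<chi> j. (complex_of_real T * mu $ j) ^ k))
       = (\<lambda>n. \<chi> a b. if a = b then \<Sum>k<n. (complex_of_real T * mu $ a) ^ k /\<^sub>R fact k else 0)"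
      by (rule ext) (auto simp: vec_eq_iff sum_component diagm_def divide_inverse_commute intro!: sum.cong)
    moreover have "((\<lambda>n. \<chi> a b. if a = b then \<Sum>k<n. (complex_of_real T * mu $ a) ^ k /\<^sub>R fact k else 0)
       \<longlonglongrightarrow> diagm (\<chi> j. exp (complex_of_real T * mu $ j)))"
      unfolding diagm_def
      apply (rule tendsto_vec_lambda)+
      using exp_converges[unfolded sums_def] by auto
    ultimately have "(\<lambda>n. \<Sum>k<n. (1 / fact k :: real) *\<^sub>R diagm (\<chi> j. (complex_of_real T * mu $ j) ^ k))
       \<longlonglongrightarrow> diagm (\<chi> j. exp (complex_of_real T * mu $ j))" by simp
    then show ?thesis by (simp add: d mat_pow_diag sums_def)
  qed
  thus ?thesis unfolding mexp_def by (rule sums_unique[symmetric])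
qed



lemma ev_nz:
  fixes g :: "complex \<Rightarrow> complex"
  assumes "g field_differentiable (at z)" "g z \<noteq> 0"
  shows "eventually (\<lambda>t. g t \<noteq> 0) (nhds z)"
proof -
  have "isCont g z" using assms(1) by (rule field_differentiable_imp_continuous_at)
  hence "(g \<longlongrightarrow> g z) (at z)" by (simp add: isCont_def)
  hence "eventually (\<lambda>t. g t \<noteq> 0) (at z)" using assms(2) by (rule tendsto_imp_eventually_ne)
  thus ?thesis using assms(2) by (simp add: eventually_nhds_conv_at)
qed

lemma det_diff:
  fixes F :: "complex \<Rightarrow> complex^'n^'n"
  assumes "\<And>a b. (\<lambda>t. F t $ a $ b) field_differentiable (at z)"
  shows "(\<lambda>t. det (F t)) field_differentiable (at z)"
proof -
  have p: "(\<lambda>t. \<Prod>i\<in>UNIV. F t $ i $ p i) field_differentiable (at z)" for p :: "'n \<Rightarrow> 'n"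
  proof -
    have "\<And>i. ((\<lambda>t. F t $ i $ p i) has_field_derivative deriv (\<lambda>t. F t $ i $ p i) z) (at z)"
      using assms by (rule field_differentiable_derivI)
    from has_field_derivative_prod[of UNIV "\<lambda>i t. F t $ i $ p i", OF this]
    show ?thesis unfolding field_differentiable_def by blast
  qed
  show ?thesis unfolding det_def
    by (intro field_differentiable_sum field_differentiable_mult field_differentiable_const p)
qed

lemma diff_transfer:
  fixes f g :: "complex \<Rightarrow> complex"
  assumes "f field_differentiable (at z)" "eventually (\<lambda>t. f t = g t) (nhds z)"
  shows "g field_differentiable (at z)"
  using assms DERIV_cong_ev[OF refl assms(2) refl] unfolding field_differentiable_def by blast

lemma solve_diff:
  fixes M :: "complex \<Rightarrow> complex^'n^'n" and x b :: "complex \<Rightarrow> complex^'n"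
  assumes M: "\<And>a c. (\<lambda>t. M t $ a $ c) field_differentiable (at 0)"
    and b: "\<And>a. (\<lambda>t. b t $ a) field_differentiable (at 0)"
    and d: "det (M 0) \<noteq> 0"
    and ev: "eventually (\<lambda>t. M t *v x t = b t) (nhds 0)"
  shows "(\<lambda>t. x t $ j) field_differentiable (at 0)"
proof -
  have dd: "(\<lambda>t. det (M t)) field_differentiable (at 0)" by (rule det_diff[OF M])
  have nz: "eventually (\<lambda>t. det (M t) \<noteq> 0) (nhds 0)" using ev_nz[OF dd] d by simp
  have e: "eventually (\<lambda>t. det (\<chi> i c. if c = j then b t $ i else M t $ i $ c) / det (M t) = x t $ j) (nhds 0)"
    using nz ev by eventually_elim (simp add: cramer)
  have "(\<lambda>t. det (\<chi> i c. if c = j then b t $ i else M t $ i $ c)) field_differentiable (at 0)"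
  proof (rule det_diff)
    fix a c show "(\<lambda>t. (\<chi> i c. if c = j then b t $ i else M t $ i $ c) $ a $ c) field_differentiable at 0"
      by (cases "c = j") (simp_all add: M b)
  qed
  hence "(\<lambda>t. det (\<chi> i c. if c = j then b t $ i else M t $ i $ c) / det (M t)) field_differentiable (at 0)"
    using dd d by (intro field_differentiable_divide) auto
  thus ?thesis using e by (rule diff_transfer)
qed

theorem lemma3p1:
  fixes A :: "real^'n^'n" and B :: "real^'m^'n" and T :: real
    and Bt :: "complex^'m^'r"
    and P :: "complex^'r \<Rightarrow> complex^'r^'r"
    and P2 :: "complex^'r \<Rightarrow> complex^'r^'n"
    and lam :: "complex^'r" and i :: 'r
  assumes T_pos: "T > 0"
    and P2_sol: "\<And>mu. admissible A mu \<Longrightarrow>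
      cmat A ** P2 mu + P2 mu ** diagm mu =
        - (cmat B ** transpose Bt)
        + mexp (T *\<^sub>R cmat A) ** cmat B ** transpose Bt ** mexp (T *\<^sub>R diagm mu)"
    and P_sol: "\<And>mu. admissible A mu \<Longrightarrow>
      diagm mu ** P mu + P mu ** diagm mu =
        - (Bt ** transpose Bt)
        + mexp (T *\<^sub>R diagm mu) ** Bt ** transpose Bt ** mexp (T *\<^sub>R diagm mu)"
    and adm: "admissible A lam"
  shows "\<exists>X X2.
     (\<forall>j k. ((\<lambda>t. P (lam + axis i t) $ j $ k) has_field_derivative X $ j $ k) (at 0)) \<and>
     (\<forall>j k. ((\<lambda>t. P2 (lam + axis i t) $ j $ k) has_field_derivative X2 $ j $ k) (at 0)) \<and>
     diagm lam ** X + X ** diagm lam =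
        - (eemat i ** P lam) - P lam ** eemat i
        + T *\<^sub>R (eemat i ** mexp (T *\<^sub>R diagm lam) ** Bt ** transpose Bt ** mexp (T *\<^sub>R diagm lam))
        + T *\<^sub>R (mexp (T *\<^sub>R diagm lam) ** Bt ** transpose Bt ** mexp (T *\<^sub>R diagm lam) ** eemat i) \<and>
     cmat A ** X2 + X2 ** diagm lam =
        - (P2 lam ** eemat i)
        + T *\<^sub>R (mexp (T *\<^sub>R cmat A) ** cmat B ** transpose Bt ** mexp (T *\<^sub>R diagm lam) ** eemat i)"
proof -
  define mu where "mu t = lam + axis i t" for t
  have mu_d: "((\<lambda>t. mu t $ j) has_field_derivative (if j = i then 1 else 0)) (at z)" for j z
    by (cases "j = i") (auto simp: mu_def axis_def intro!: derivative_eq_intros)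
  have mu_fd: "(\<lambda>t. mu t $ j) field_differentiable (at z)" for j z
    using mu_d unfolding field_differentiable_def by blast
  have mu0: "mu 0 = lam" by (simp add: mu_def axis_def vec_eq_iff)
  have adm_ev: "eventually (\<lambda>t. admissible A (mu t)) (nhds 0)"
  proof -
    have e1: "eventually (\<lambda>t. \<forall>a b. mu t $ a + mu t $ b \<noteq> 0) (nhds 0)"
    proof (intro eventually_all_finite)
      fix a b
      have "(\<lambda>t. mu t $ a + mu t $ b) field_differentiable (at 0)"
        by (intro field_differentiable_add mu_fd)
      moreover have "mu 0 $ a + mu 0 $ b \<noteq> 0" using adm by (simp add: mu0 admissible_def)
      ultimately show "eventually (\<lambda>t. mu t $ a + mu t $ b \<noteq> 0) (nhds 0)"
        by (rule ev_nz[where g="\<lambda>t. mu t $ a + mu t $ b"])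
    qed
    have e2: "eventually (\<lambda>t. \<forall>k. det (cmat A + mat (mu t $ k)) \<noteq> 0) (nhds 0)"
    proof (intro eventually_all_finite)
      fix k
      have "(\<lambda>t. det (cmat A + mat (mu t $ k))) field_differentiable (at 0)"
      proof (rule det_diff)
        fix a b show "(\<lambda>t. (cmat A + mat (mu t $ k)) $ a $ b) field_differentiable at 0"
          by (cases "a = b") (auto simp: mat_def intro!: field_differentiable_add field_differentiable_const mu_fd)
      qed
      moreover have "det (cmat A + mat (mu 0 $ k)) \<noteq> 0"
        using adm by (simp add: mu0 admissible_def not_spec_iff)
      ultimately show "eventually (\<lambda>t. det (cmat A + mat (mu t $ k)) \<noteq> 0) (nhds 0)"
        by (rule ev_nz[where g="\<lambda>t. det (cmat A + mat (mu t $ k))"])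
    qed
    show ?thesis using e1 e2 by eventually_elim (simp add: admissible_def not_spec_iff)
  qed
  define G where "G = Bt ** transpose Bt"
  define H where "H = cmat B ** transpose Bt"
  define C where "C = mexp (T *\<^sub>R cmat A) ** cmat B ** transpose Bt"
  define ex where "ex t j = exp (complex_of_real T * mu t $ j)" for t j
  have mexp_mu: "mexp (T *\<^sub>R diagm (mu t)) = diagm (\<chi> j. ex t j)" for t
    by (simp add: mexp_diag ex_def)
  have ex_d: "((\<lambda>t. ex t j) has_field_derivative ex z j * (complex_of_real T * (if j = i then 1 else 0))) (at z)" for j z
    unfolding ex_def by (auto intro!: derivative_eq_intros mu_d)
  have ex_fd: "(\<lambda>t. ex t j) field_differentiable (at z)" for j z
    using ex_d unfolding field_differentiable_def by blast
  have RP: "(- (Bt ** transpose Bt) + mexp (T *\<^sub>R diagm (mu t)) ** Bt ** transpose Bt ** mexp (T *\<^sub>R diagm (mu t))) $ a $ c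
      = - G $ a $ c + ex t a * G $ a $ c * ex t c" for t a c
  proof -
    have "mexp (T *\<^sub>R diagm (mu t)) ** Bt ** transpose Bt ** mexp (T *\<^sub>R diagm (mu t)) = diagm (\<chi> j. ex t j) ** G ** diagm (\<chi> j. ex t j)"
      by (simp add: mexp_mu G_def matrix_mul_assoc)
    thus ?thesis by (simp add: diag_right diag_left G_def)
  qed
  have RP2: "(- (cmat B ** transpose Bt) + mexp (T *\<^sub>R cmat A) ** cmat B ** transpose Bt ** mexp (T *\<^sub>R diagm (mu t))) $ a $ c
      = - H $ a $ c + C $ a $ c * ex t c" for t a c
    by (simp add: mexp_mu H_def C_def diag_right)
  define Q where "Q t = P (mu t)" for t
  define Q2 where "Q2 t = P2 (mu t)" for t
  have eqP: "eventually (\<lambda>t. \<forall>a c. mu t $ a * Q t $ a $ c + Q t $ a $ c * mu t $ c = - G $ a $ c + ex t a * G $ a $ c * ex t c) (nhds 0)"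
    using adm_ev
  proof eventually_elim
    case (elim t)
    show ?case
    proof (intro allI)
      fix a c
      have "(diagm (mu t) ** P (mu t) + P (mu t) ** diagm (mu t)) $ a $ c = (- (Bt ** transpose Bt) + mexp (T *\<^sub>R diagm (mu t)) ** Bt ** transpose Bt ** mexp (T *\<^sub>R diagm (mu t))) $ a $ c"
        by (simp only: P_sol[OF elim])
      hence "mu t $ a * P (mu t) $ a $ c + P (mu t) $ a $ c * mu t $ c = - G $ a $ c + ex t a * G $ a $ c * ex t c"
        unfolding RP by (simp only: vector_add_component diag_left diag_right)
      thus "mu t $ a * Q t $ a $ c + Q t $ a $ c * mu t $ c = - G $ a $ c + ex t a * G $ a $ c * ex t c"
        by (simp add: RP diag_left diag_right Q_def)
    qed
  qed
  have eqP2: "eventually (\<lambda>t. \<forall>a c. (cmat A ** Q2 t) $ a $ c + Q2 t $ a $ c * mu t $ c = - H $ a $ c + C $ a $ c * ex t c) (nhds 0)"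
    using adm_ev
  proof eventually_elim
    case (elim t)
    show ?case
    proof (intro allI)
      fix a c
      have "(cmat A ** P2 (mu t) + P2 (mu t) ** diagm (mu t)) $ a $ c = (- (cmat B ** transpose Bt) + mexp (T *\<^sub>R cmat A) ** cmat B ** transpose Bt ** mexp (T *\<^sub>R diagm (mu t))) $ a $ c"
        by (simp only: P2_sol[OF elim])
      hence "(cmat A ** P2 (mu t)) $ a $ c + P2 (mu t) $ a $ c * mu t $ c = - H $ a $ c + C $ a $ c * ex t c"
        unfolding RP2 by (simp only: vector_add_component diag_right)
      thus "(cmat A ** Q2 t) $ a $ c + Q2 t $ a $ c * mu t $ c = - H $ a $ c + C $ a $ c * ex t c"
        by (simp add: RP2 diag_right Q2_def)
    qed
  qed
  have Qd: "(\<lambda>t. Q t $ l $ c) field_differentiable at 0" for l c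
  proof -
    have "(\<lambda>t. (\<chi> l. Q t $ l $ c) $ l) field_differentiable at 0"
    proof (rule solve_diff[where M="\<lambda>t. diagm (mu t) + mat (mu t $ c)"
          and b="\<lambda>t. \<chi> a. - G $ a $ c + ex t a * G $ a $ c * ex t c"])
      fix a b show "(\<lambda>t. (diagm (mu t) + mat (mu t $ c)) $ a $ b) field_differentiable at 0"
        by (cases "a = b") (auto simp: mat_def diagm_def intro!: field_differentiable_add field_differentiable_const mu_fd)
    next
      fix a show "(\<lambda>t. (\<chi> a. - G $ a $ c + ex t a * G $ a $ c * ex t c) $ a) field_differentiable at 0"
        by (auto intro!: field_differentiable_add field_differentiable_diff field_differentiable_mult field_differentiable_const ex_fd)
    next
      have "det (diagm (mu 0) + mat (mu 0 $ c)) = (\<Prod>a\<in>UNIV. lam $ a + lam $ c)"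
        by (subst det_diagonal) (auto simp: diagm_def mat_def mu0)
      also have "\<dots> \<noteq> 0" using adm by (simp add: admissible_def)
      finally show "det (diagm (mu 0) + mat (mu 0 $ c)) \<noteq> 0" .
    next
      show "eventually (\<lambda>t. (diagm (mu t) + mat (mu t $ c)) *v (\<chi> l. Q t $ l $ c) = (\<chi> a. - G $ a $ c + ex t a * G $ a $ c * ex t c)) (nhds 0)"
        using eqP by eventually_elim (simp add: vec_eq_iff col_eq[symmetric] diag_left diag_right)
    qed
    thus ?thesis by simp
  qed
  have Q2d: "(\<lambda>t. Q2 t $ l $ c) field_differentiable at 0" for l c
  proof -
    have "(\<lambda>t. (\<chi> l. Q2 t $ l $ c) $ l) field_differentiable at 0"
    proof (rule solve_diff[where M="\<lambda>t. cmat A + mat (mu t $ c)"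
          and b="\<lambda>t. \<chi> a. - H $ a $ c + C $ a $ c * ex t c"])
      fix a b show "(\<lambda>t. (cmat A + mat (mu t $ c)) $ a $ b) field_differentiable at 0"
        by (cases "a = b") (auto simp: mat_def intro!: field_differentiable_add field_differentiable_const mu_fd)
    next
      fix a show "(\<lambda>t. (\<chi> a. - H $ a $ c + C $ a $ c * ex t c) $ a) field_differentiable at 0"
        by (auto intro!: field_differentiable_add field_differentiable_diff field_differentiable_mult field_differentiable_const ex_fd)
    next
      show "det (cmat A + mat (mu 0 $ c)) \<noteq> 0"
        using adm by (simp add: mu0 admissible_def not_spec_iff)
    next
      show "eventually (\<lambda>t. (cmat A + mat (mu t $ c)) *v (\<chi> l. Q2 t $ l $ c) = (\<chi> a. - H $ a $ c + C $ a $ c * ex t c)) (nhds 0)"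
        using eqP2 by eventually_elim (simp add: vec_eq_iff col_eq[symmetric] diag_right)
    qed
    thus ?thesis by simp
  qed
  define X where "X = (\<chi> j k. deriv (\<lambda>t. Q t $ j $ k) 0)"
  define X2 where "X2 = (\<chi> j k. deriv (\<lambda>t. Q2 t $ j $ k) 0)"
  have XD: "((\<lambda>t. Q t $ j $ k) has_field_derivative X $ j $ k) (at 0)" for j k
    unfolding X_def using Qd by (simp add: field_differentiable_derivI)
  have X2D: "((\<lambda>t. Q2 t $ j $ k) has_field_derivative X2 $ j $ k) (at 0)" for j k
    unfolding X2_def using Q2d by (simp add: field_differentiable_derivI)
  have E0: "mexp (T *\<^sub>R diagm lam) = diagm (\<chi> j. ex 0 j)"
    using mexp_mu[of 0] by (simp add: mu0)
  have h1: "eemat i ** mexp (T *\<^sub>R diagm lam) ** Bt ** transpose Bt ** mexp (T *\<^sub>R diagm lam)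
      = eemat i ** (diagm (\<chi> j. ex 0 j) ** G ** diagm (\<chi> j. ex 0 j))"
    by (simp add: E0 G_def matrix_mul_assoc)
  have h2: "mexp (T *\<^sub>R diagm lam) ** Bt ** transpose Bt ** mexp (T *\<^sub>R diagm lam) ** eemat i
      = (diagm (\<chi> j. ex 0 j) ** G ** diagm (\<chi> j. ex 0 j)) ** eemat i"
    by (simp add: E0 G_def matrix_mul_assoc)
  have h3: "mexp (T *\<^sub>R cmat A) ** cmat B ** transpose Bt ** mexp (T *\<^sub>R diagm lam) ** eemat i
      = (C ** diagm (\<chi> j. ex 0 j)) ** eemat i"
    by (simp add: E0 C_def)
  have PQ: "P lam = Q 0" "P2 lam = Q2 0" by (simp_all add: Q_def Q2_def mu0)
  have eq1: "(diagm lam ** X + X ** diagm lam) $ a $ c =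
        (- (eemat i ** P lam) - P lam ** eemat i
        + T *\<^sub>R (eemat i ** mexp (T *\<^sub>R diagm lam) ** Bt ** transpose Bt ** mexp (T *\<^sub>R diagm lam))
        + T *\<^sub>R (mexp (T *\<^sub>R diagm lam) ** Bt ** transpose Bt ** mexp (T *\<^sub>R diagm lam) ** eemat i)) $ a $ c" for a c
  proof -
    note dL = DERIV_add[OF DERIV_mult[OF mu_d[of a 0] XD[of a c]] DERIV_mult[OF XD[of a c] mu_d[of c 0]]]
    note dR0 = DERIV_add[OF DERIV_const[where k="- G $ a $ c"] DERIV_mult[OF DERIV_mult[OF ex_d[of a 0] DERIV_const[where k="G $ a $ c"]] ex_d[of c 0]]]
    have ev: "eventually (\<lambda>t. mu t $ a * Q t $ a $ c + Q t $ a $ c * mu t $ c = - G $ a $ c + ex t a * G $ a $ c * ex t c) (nhds 0)"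
      using eqP by eventually_elim blast
    note dR = DERIV_cong_ev[OF refl ev refl, THEN iffD2, OF dR0]
    from DERIV_unique[OF dL dR] have eq: "(if a = i then 1 else 0) * Q 0 $ a $ c + X $ a $ c * lam $ a +
        (X $ a $ c * lam $ c + (if c = i then 1 else 0) * Q 0 $ a $ c) =
        0 + ((ex 0 a * (complex_of_real T * (if a = i then 1 else 0)) * G $ a $ c + 0 * ex 0 a) * ex 0 c +
        ex 0 c * (complex_of_real T * (if c = i then 1 else 0)) * (ex 0 a * G $ a $ c))"
      by (simp add: mu0)
    have L: "(diagm lam ** X + X ** diagm lam) $ a $ c = lam $ a * X $ a $ c + X $ a $ c * lam $ c"
      by (simp add: diag_left diag_right)
    have R: "(- (eemat i ** P lam) - P lam ** eemat i
        + T *\<^sub>R (eemat i ** mexp (T *\<^sub>R diagm lam) ** Bt ** transpose Bt ** mexp (T *\<^sub>R diagm lam))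
        + T *\<^sub>R (mexp (T *\<^sub>R diagm lam) ** Bt ** transpose Bt ** mexp (T *\<^sub>R diagm lam) ** eemat i)) $ a $ c
      = - (if a = i then Q 0 $ a $ c else 0) - (if c = i then Q 0 $ a $ c else 0)
        + complex_of_real T * (if a = i then ex 0 a * G $ a $ c * ex 0 c else 0)
        + complex_of_real T * (if c = i then ex 0 a * G $ a $ c * ex 0 c else 0)"
      unfolding h1 h2 PQ
      by (simp only: vector_add_component vector_minus_component vector_uminus_component
          vector_scaleR_component ee_left ee_right diag_left diag_right vec_lambda_beta) (simp add: scaleR_conv_of_real)
    show ?thesis unfolding L R
      using eq by (cases "a = i"; cases "c = i") (simp_all add: algebra_simps)
  qed
  have eq2: "(cmat A ** X2 + X2 ** diagm lam) $ a $ c =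
        (- (P2 lam ** eemat i)
        + T *\<^sub>R (mexp (T *\<^sub>R cmat A) ** cmat B ** transpose Bt ** mexp (T *\<^sub>R diagm lam) ** eemat i)) $ a $ c" for a c
  proof -
    have dS: "((\<lambda>t. (cmat A ** Q2 t) $ a $ c) has_field_derivative (cmat A ** X2) $ a $ c) (at 0)"
      unfolding matrix_matrix_mult_def by (auto intro!: DERIV_sum DERIV_cmult X2D)
    note dL = DERIV_add[OF dS DERIV_mult[OF X2D[of a c] mu_d[of c 0]]]
    note dR0 = DERIV_add[OF DERIV_const[where k="- H $ a $ c"] DERIV_mult[OF DERIV_const[where k="C $ a $ c"] ex_d[of c 0]]]
    have ev: "eventually (\<lambda>t. (cmat A ** Q2 t) $ a $ c + Q2 t $ a $ c * mu t $ c = - H $ a $ c + C $ a $ c * ex t c) (nhds 0)"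
      using eqP2 by eventually_elim blast
    note dR = DERIV_cong_ev[OF refl ev refl, THEN iffD2, OF dR0]
    from DERIV_unique[OF dL dR] have eq: "(cmat A ** X2) $ a $ c + (X2 $ a $ c * lam $ c + (if c = i then 1 else 0) * Q2 0 $ a $ c) =
        0 + (0 * ex 0 c + ex 0 c * (complex_of_real T * (if c = i then 1 else 0)) * C $ a $ c)"
      by (simp add: mu0)
    have L: "(cmat A ** X2 + X2 ** diagm lam) $ a $ c = (cmat A ** X2) $ a $ c + X2 $ a $ c * lam $ c"
      by (simp add: diag_right)
    have R: "(- (P2 lam ** eemat i)
        + T *\<^sub>R (mexp (T *\<^sub>R cmat A) ** cmat B ** transpose Bt ** mexp (T *\<^sub>R diagm lam) ** eemat i)) $ a $ c
      = - (if c = i then Q2 0 $ a $ c else 0)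
        + complex_of_real T * (if c = i then C $ a $ c * ex 0 c else 0)"
      unfolding h3 PQ
      by (simp only: vector_add_component vector_uminus_component
          vector_scaleR_component ee_right diag_right vec_lambda_beta) (simp add: scaleR_conv_of_real)
    show ?thesis unfolding L R
      using eq by (cases "c = i") (simp_all add: algebra_simps)
  qed
  show ?thesis
  proof (intro exI conjI allI)
    fix j k show "((\<lambda>t. P (lam + axis i t) $ j $ k) has_field_derivative X $ j $ k) (at 0)"
      using XD by (simp add: Q_def mu_def)
  next
    fix j k show "((\<lambda>t. P2 (lam + axis i t) $ j $ k) has_field_derivative X2 $ j $ k) (at 0)"
      using X2D by (simp add: Q2_def mu_def)
  next
    show "diagm lam ** X + X ** diagm lam =
        - (eemat i ** P lam) - P lam ** eemat i
        + T *\<^sub>R (eemat i ** mexp (T *\<^sub>R diagm lam) ** Bt ** transpose Bt ** mexp (T *\<^sub>R diagm lam))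
        + T *\<^sub>R (mexp (T *\<^sub>R diagm lam) ** Bt ** transpose Bt ** mexp (T *\<^sub>R diagm lam) ** eemat i)"
      using eq1 by (simp add: vec_eq_iff)
  next
    show "cmat A ** X2 + X2 ** diagm lam =
        - (P2 lam ** eemat i)
        + T *\<^sub>R (mexp (T *\<^sub>R cmat A) ** cmat B ** transpose Bt ** mexp (T *\<^sub>R diagm lam) ** eemat i)"
      using eq2 by (simp add: vec_eq_iff)
  qed
qed

end
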